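(* Let $C\in\mathcal C_n$, $A=\Xi^{-1}(C)$, and let $L$ be the $n\times n$ matrix with $L_{ij}=\sum_{k=1}^n kA_{i,j,k}$. Let $\Sigma(L)_{i,j}=\sum_{a=1}^i\sum_{b=1}^j L_{ab}$ and $\rho(C)=\sum_{0\le i,j,k\le n}C_{i,j,k}$. Then $$\rho(C)+\sum_{1\le i,j\le n}\Sigma(L)_{i,j}=\frac{n^2(n+1)^3}{4}.$$
   Context: Let $[n]=\{1,\dots,n\}$, $[0,n]=\{0,\dots,n\}$. A corner-sum hypermatrix of order $n$ is an integer array $C=(C_{i,j,k})_{i,j,k\in[0,n]}$ such that for all $i,j\in[0,n]$: $C_{i,j,0}=C_{i,0,j}=C_{0,i,j}=0$, $C_{i,j,n}=C_{i,n,j}=C_{n,i,j}=ij$, and for all $k\in[n]$ each of $C_{i,j,k}-C_{i,j,k-1}$, $C_{i,k,j}-C_{i,k-1,j}$, $C_{k,i,j}-C_{k-1,i,j}$ is an integer in $\{\max(0,i+j-n),\dots,\min(i,j)\}$; $\mathcal C_n$ is the set of these. For an array $C$ indexed by $[0,n]^3$, $\Xi^{-1}(C)$ is the array indexed by $[n]^3$ with $\Xi^{-1}(C)_{i,j,k}=C_{i,j,k}-C_{i-1,j,k}-C_{i,j-1,k}-C_{i,j,k-1}+C_{i-1,j-1,k}+C_{i-1,j,k-1}+C_{i,j-1,k-1}-C_{i-1,j-1,k-1}$. *)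

theory Defs
  imports Complex_Main
begin

(* A hypermatrix indexed by [0,n]^3 is a function nat => nat => nat => int;
   only the values at indices in {0..n} are relevant. *)

definition corner_sum_hypermatrices :: "nat \<Rightarrow> (nat \<Rightarrow> nat \<Rightarrow> nat \<Rightarrow> int) set" where
  "corner_sum_hypermatrices n = {C.
     (\<forall>i\<in>{0..n}. \<forall>j\<in>{0..n}.
        C i j 0 = 0 \<and> C i 0 j = 0 \<and> C 0 i j = 0 \<and>
        C i j n = int i * int j \<and> C i n j = int i * int j \<and> C n i j = int i * int j \<and>
        (\<forall>k\<in>{1..n}.
           let lo = max 0 (int i + int j - int n); hi = int (min i j) in
           C i j k - C i j (k - 1) \<in> {lo..hi} \<and>
           C i k j - C i (k - 1) j \<in> {lo..hi} \<and>
           C k i j - C (k - 1) i j \<in> {lo..hi}))}"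

(* Xi^{-1}(C), meaningful for indices in [n]^3 *)
definition Xi_inv :: "(nat \<Rightarrow> nat \<Rightarrow> nat \<Rightarrow> int) \<Rightarrow> nat \<Rightarrow> nat \<Rightarrow> nat \<Rightarrow> int" where
  "Xi_inv C i j k = C i j k - C (i-1) j k - C i (j-1) k - C i j (k-1)
      + C (i-1) (j-1) k + C (i-1) j (k-1) + C i (j-1) (k-1) - C (i-1) (j-1) (k-1)"

end

theory Submission
  imports Defs
begin

lemma tele2:
  fixes F :: "nat \<Rightarrow> nat \<Rightarrow> int"
  shows "(\<Sum>a=1..i. \<Sum>b=1..j. F a b - F (a-1) b - F a (b-1) + F (a-1) (b-1))
         = F i j - F 0 j - F i 0 + F 0 0"
proof (induction i)
  case 0 then show ?case by simp
next
  case (Suc i)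
  have "(\<Sum>b=1..j. F (Suc i) b - F i b - F (Suc i) (b-1) + F i (b-1))
        = F (Suc i) j - F i j - F (Suc i) 0 + F i 0"
    by (induction j) auto
  then show ?case using Suc by simp
qed

lemma abel:
  fixes g :: "nat \<Rightarrow> int"
  shows "(\<Sum>k=1..n. int k * (g k - g (k-1))) = int n * g n - (\<Sum>k<n. g k)"
  by (induction n) (auto simp: algebra_simps)

lemma gauss: "2 * (\<Sum>i=1..n. int i) = int n * (int n + 1)"
  by (induction n) (auto simp: algebra_simps)

lemma fin:
  fixes X S m :: int
  assumes "X = (m + 1) * S * S" "2 * S = m * (m + 1)"
  shows "rat_of_int X = of_int m ^ 2 * (of_int m + 1) ^ 3 / 4"
proof -
  have "4 * X = (m + 1) * (2 * S) * (2 * S)" using assms(1) by simp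
  also have "\<dots> = m ^ 2 * (m + 1) ^ 3" unfolding assms(2)
    by (simp add: power2_eq_square power3_eq_cube)
  finally have "rat_of_int (4 * X) = rat_of_int (m ^ 2 * (m + 1) ^ 3)" by simp
  thus ?thesis by simp
qed

theorem mainTheorem14:
  fixes n :: nat and C :: "nat \<Rightarrow> nat \<Rightarrow> nat \<Rightarrow> int"
    and A :: "nat \<Rightarrow> nat \<Rightarrow> nat \<Rightarrow> int" and L :: "nat \<Rightarrow> nat \<Rightarrow> int"
  assumes "C \<in> corner_sum_hypermatrices n"
    and "A = Xi_inv C"
    and "L = (\<lambda>i j. \<Sum>k=1..n. int k * A i j k)"
  shows "rat_of_int ((\<Sum>i=0..n. \<Sum>j=0..n. \<Sum>k=0..n. C i j k)
            + (\<Sum>i=1..n. \<Sum>j=1..n. \<Sum>a=1..i. \<Sum>b=1..j. L a b))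
         = of_nat n ^ 2 * (of_nat n + 1) ^ 3 / 4"
proof -
  have Z1: "C i j 0 = 0" "C i 0 j = 0" "C 0 i j = 0" "C i j n = int i * int j"
    if "i \<le> n" "j \<le> n" for i j
    using assms(1) that unfolding corner_sum_hypermatrices_def by auto
  have SL: "(\<Sum>a=1..i. \<Sum>b=1..j. L a b) = int n * (int i * int j) - (\<Sum>k<n. C i j k)"
    if "1 \<le> i" "i \<le> n" "1 \<le> j" "j \<le> n" for i j
  proof -
    have "(\<Sum>a=1..i. \<Sum>b=1..j. L a b) = (\<Sum>k=1..n. int k * (\<Sum>a=1..i. \<Sum>b=1..j. A a b k))"
    proof -
      have "(\<Sum>a=1..i. \<Sum>b=1..j. L a b) = (\<Sum>a=1..i. \<Sum>k=1..n. \<Sum>b=1..j. int k * A a b k)"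
        unfolding assms(3) by simp (rule sum.cong[OF refl], rule sum.swap)
      also have "\<dots> = (\<Sum>k=1..n. \<Sum>a=1..i. \<Sum>b=1..j. int k * A a b k)"
        by (rule sum.swap)
      finally show ?thesis by (simp add: sum_distrib_left)
    qed
    also have "\<dots> = (\<Sum>k=1..n. int k * (C i j k - C i j (k-1)))"
    proof (rule sum.cong[OF refl])
      fix k assume k: "k \<in> {1..n}"
      have "(\<Sum>a=1..i. \<Sum>b=1..j. A a b k) =
        (\<Sum>a=1..i. \<Sum>b=1..j. (\<lambda>a b. C a b k - C a b (k-1)) a b - (\<lambda>a b. C a b k - C a b (k-1)) (a-1) b
           - (\<lambda>a b. C a b k - C a b (k-1)) a (b-1) + (\<lambda>a b. C a b k - C a b (k-1)) (a-1) (b-1))"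
        unfolding assms(2) Xi_inv_def by (simp add: algebra_simps)
      also have "\<dots> = C i j k - C i j (k-1)"
      proof -
        have km: "k - 1 \<le> n" using k by auto
        have z: "C 0 j (k-1) = 0" "C i 0 (k-1) = 0" "C 0 0 (k-1) = 0"
          "C 0 j k = 0" "C i 0 k = 0" "C 0 0 k = 0"
          using Z1(2,3) km k that by auto
        show ?thesis
          using tele2[where F="\<lambda>a b. C a b k - C a b (k-1)" and i=i and j=j] z by simp
      qed
      finally show "int k * (\<Sum>a=1..i. \<Sum>b=1..j. A a b k) = int k * (C i j k - C i j (k-1))"
        by simp
    qed
    also have "\<dots> = int n * (int i * int j) - (\<Sum>k<n. C i j k)"
      unfolding abel using Z1 that by simp
    finally show ?thesis .
  qed
  have R: "(\<Sum>i=0..n. \<Sum>j=0..n. \<Sum>k=0..n. C i j k) = (\<Sum>i=1..n. \<Sum>j=1..n. \<Sum>k=0..n. C i j k)"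
  proof -
    have "(\<Sum>i=0..n. \<Sum>j=0..n. \<Sum>k=0..n. C i j k) = (\<Sum>i=1..n. \<Sum>j=0..n. \<Sum>k=0..n. C i j k)"
    proof -
      have "(\<Sum>j=0..n. \<Sum>k=0..n. C 0 j k) = 0" using Z1(3) by simp
      then show ?thesis by (simp add: sum.atLeast_Suc_atMost)
    qed
    also have "\<dots> = (\<Sum>i=1..n. \<Sum>j=1..n. \<Sum>k=0..n. C i j k)"
    proof (rule sum.cong[OF refl])
      fix i assume i: "i \<in> {1..n}"
      have "(\<Sum>k=0..n. C i 0 k) = 0" using Z1(2) i by simp
      then show "(\<Sum>j=0..n. \<Sum>k=0..n. C i j k) = (\<Sum>j=1..n. \<Sum>k=0..n. C i j k)"
        by (simp add: sum.atLeast_Suc_atMost)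
    qed
    finally show ?thesis .
  qed
  have K: "(\<Sum>k=0..n. C i j k) = (\<Sum>k<n. C i j k) + int i * int j"
    if "i \<le> n" "j \<le> n" for i j
    using Z1[OF that] by (simp add: atLeast0AtMost lessThan_Suc_atMost[symmetric])
  have "(\<Sum>i=0..n. \<Sum>j=0..n. \<Sum>k=0..n. C i j k)
            + (\<Sum>i=1..n. \<Sum>j=1..n. \<Sum>a=1..i. \<Sum>b=1..j. L a b)
        = (\<Sum>i=1..n. \<Sum>j=1..n. (int n + 1) * (int i * int j))"
    unfolding R sum.distrib[symmetric]
  proof (rule sum.cong[OF refl])
    fix i assume i: "i \<in> {1..n}"
    show "(\<Sum>j=1..n. (\<Sum>k=0..n. C i j k) + (\<Sum>a=1..i. \<Sum>b=1..j. L a b))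
        = (\<Sum>j=1..n. (int n + 1) * (int i * int j))"
    proof (rule sum.cong[OF refl])
      fix j assume j: "j \<in> {1..n}"
      show "(\<Sum>k=0..n. C i j k) + (\<Sum>a=1..i. \<Sum>b=1..j. L a b) = (int n + 1) * (int i * int j)"
        using SL[of i j] K[of i j] i j by (simp add: algebra_simps)
    qed
  qed
  also have "\<dots> = (int n + 1) * (\<Sum>i=1..n. int i) * (\<Sum>i=1..n. int i)"
  proof -
    have "(\<Sum>i=1..n. \<Sum>j=1..n. (int n + 1) * (int i * int j))
        = (\<Sum>i=1..n. ((int n + 1) * int i) * (\<Sum>j=1..n. int j))"
      by (simp add: sum_distrib_left mult.assoc)
    also have "\<dots> = (\<Sum>i=1..n. (int n + 1) * int i) * (\<Sum>j=1..n. int j)"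
      by (simp add: sum_distrib_right)
    also have "\<dots> = (int n + 1) * (\<Sum>i=1..n. int i) * (\<Sum>i=1..n. int i)"
      by (simp add: sum_distrib_left)
    finally show ?thesis .
  qed
  finally have E: "(\<Sum>i=0..n. \<Sum>j=0..n. \<Sum>k=0..n. C i j k)
            + (\<Sum>i=1..n. \<Sum>j=1..n. \<Sum>a=1..i. \<Sum>b=1..j. L a b)
       = (int n + 1) * (\<Sum>i=1..n. int i) * (\<Sum>i=1..n. int i)" .
  show ?thesis using fin[OF E gauss] by simp
qed

end
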